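(* For nonnegative integers $n,m$, \[\sum_{r=0}^n\sum_{s=0}^m\mathcal{K}_{n,m;r,s}(z/q,w/q;q)\,\Phi_{r,s}(u,v;c,d;z,w;q)=\Phi_{n,m}(uz,vw;cz,dw;z,w;q).\]
   Context: For $n\in\mathbb{Z}$, $(a;q)_n=(a;q)_\infty/(aq^n;q)_\infty$ ($1/(q;q)_n=0$ for $n<0$), $(a_1,\dots,a_k;q)_n=\prod_i(a_i;q)_n$. $\mathcal{K}_{n,m;r,s}(z,w;q):=\frac{z^rw^sq^{r^2-rs+s^2}}{(q;q)_{n-r}(q;q)_{m-s}}$. Let $Q=\{y=(y_1,y_2,y_3)\in\mathbb{Z}^3:y_1+y_2+y_3=0\}$ and $y_{ij}:=y_i-y_j$. For integers $n,m$ and $y\in Q$, \[\Phi_{n,m;y}(z,w;q):=\frac{(zwq;q)_{n+m}}{(q;q)_{n-y_1}(zq;q)_{n-y_2}(zwq;q)_{n-y_3}(q;q)_{m+y_3}(wq;q)_{m+y_2}(zwq;q)_{m+y_1}}.\] With $\rho=(1,2,3)$ and permutations $\sigma\in S_3$ written in one-line notation $\sigma=(\sigma_1,\sigma_2,\sigma_3)$ (so $\sigma-\rho\in Q$), define \[\Phi_{n,m}(u,v;c,d;z,w;q):=\sum_{\sigma\in S_3}\operatorname{sgn}(\sigma)(uz)^{\sigma_1-1}\Big(\frac{v}{d}\Big)^{\chi(\sigma_3=1)}\Big(\frac{c}{u}\Big)^{\chi(\sigma_1=3)}(dw)^{3-\sigma_3}\,\Phi_{n,m;\sigma-\rho}(z/q,w/q;q),\]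 where $\chi$ is the indicator function. *)

theory Defs
  imports Complex_Main "HOL-Combinatorics.Permutations"
begin

text \<open>q-Pochhammer symbol with integer index:
  (a;q)_n = (a;q)_inf / (a q^n;q)_inf, i.e. a finite product for n >= 0 and
  1 / prod_{k=1}^{-n} (1 - a q^{-k}) for n < 0.  For a = q and n < 0 the
  product contains the factor 1 - q/q = 0, so (q;q)_n = 1/0 = 0 and hence
  1/(q;q)_n = 0, as in the paper's convention.\<close>
definition qpoch :: "complex \<Rightarrow> complex \<Rightarrow> int \<Rightarrow> complex" where
  "qpoch a q n =
     (if 0 \<le> n then (\<Prod>k<nat n. (1 - a * q ^ k))
      else 1 / (\<Prod>k\<in>{1..nat (- n)}. (1 - a / q ^ k)))"

definition Kker :: "int \<Rightarrow> int \<Rightarrow> int \<Rightarrow> int \<Rightarrow> complex \<Rightarrow> complex \<Rightarrow> complex \<Rightarrow> complex" where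
  "Kker n m r s z w q =
     z powi r * w powi s * q powi (r^2 - r*s + s^2)
     / (qpoch q q (n - r) * qpoch q q (m - s))"

definition Phiy :: "int \<Rightarrow> int \<Rightarrow> int \<Rightarrow> int \<Rightarrow> int \<Rightarrow> complex \<Rightarrow> complex \<Rightarrow> complex \<Rightarrow> complex" where
  "Phiy n m y1 y2 y3 z w q =
     qpoch (z*w*q) q (n + m)
     / (qpoch q q (n - y1) * qpoch (z*q) q (n - y2) * qpoch (z*w*q) q (n - y3)
        * qpoch q q (m + y3) * qpoch (w*q) q (m + y2) * qpoch (z*w*q) q (m + y1))"

text \<open>Phi_{n,m}(u,v;c,d;z,w;q): sum over sigma in S_3, sigma a permutation of
  {1,2,3} with one-line notation (sigma 1, sigma 2, sigma 3), rho = (1,2,3).\<close>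
definition PhiS :: "int \<Rightarrow> int \<Rightarrow> complex \<Rightarrow> complex \<Rightarrow> complex \<Rightarrow> complex
                    \<Rightarrow> complex \<Rightarrow> complex \<Rightarrow> complex \<Rightarrow> complex" where
  "PhiS n m u v c d z w q =
     (\<Sum>\<sigma>\<in>{\<sigma>. \<sigma> permutes {1,2,3::nat}}.
        of_int (sign \<sigma>) * (u*z) ^ (\<sigma> 1 - 1)
        * (if \<sigma> 3 = 1 then v / d else 1)
        * (if \<sigma> 1 = 3 then c / u else 1)
        * (d*w) ^ (3 - \<sigma> 3)
        * Phiy n m (int (\<sigma> 1) - 1) (int (\<sigma> 2) - 2) (int (\<sigma> 3) - 3) (z/q) (w/q) q)"

end

theory Submission imports Defs begin

definition P :: "complex \<Rightarrow> complex \<Rightarrow> nat \<Rightarrow> complex" where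
  "P x q k = (\<Prod>i<k. 1 - x * q ^ i)"

lemma P_0[simp]: "P x q 0 = 1" by (simp add: P_def)
lemma P_Suc: "P x q (Suc k) = P x q k * (1 - x * q ^ k)"
  by (simp add: P_def)
lemma P_Suc': "P x q (Suc k) = (1 - x) * P (x*q) q k"
  unfolding P_def by (subst prod.lessThan_Suc_shift) (simp add: mult.assoc)
lemma P_add: "P x q (a + b) = P x q a * P (x * q ^ a) q b"
  by (induction b) (simp_all add: P_Suc power_add mult.assoc)

lemma P_nz:
  assumes "\<And>i. i < k \<Longrightarrow> x * q ^ i \<noteq> 1"
  shows "P x q k \<noteq> 0"
  using assms unfolding P_def by (auto simp: prod_zero_iff)

definition qb :: "complex \<Rightarrow> nat \<Rightarrow> nat \<Rightarrow> complex" where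
  "qb q n k = (if k \<le> n then P q q n / (P q q k * P q q (n - k)) else 0)"

lemma pascal_alg:
  fixes A B C a b :: complex
  assumes "1 - a \<noteq> 0" "1 - b \<noteq> 0" "B \<noteq> 0" "C \<noteq> 0"
  shows "A * (1 - a*b) / (B * (1 - a) * (C * (1 - b))) = a * (A / (B * (1 - a) * C)) + A / (B * (C * (1 - b)))"
proof -
  have "a * (A / (B * (1 - a) * C)) + A / (B * (C * (1 - b))) = (a*A*(1-b) + A*(1-a)) / (B * (1 - a) * (C * (1 - b)))"
    using assms by (simp add: add_divide_distrib)
  also have "a*A*(1-b) + A*(1-a) = A * (1 - a*b)" by (simp add: algebra_simps)
  finally show ?thesis by simp
qed

lemma pascal_alg2:
  fixes A B C a b :: complex
  assumes "1 - a \<noteq> 0" "1 - b \<noteq> 0" "B \<noteq> 0" "C \<noteq> 0"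
  shows "A * (1 - a*b) / (B * (1 - a) * (C * (1 - b))) = A / (B * (1 - a) * C) + b * (A / (B * (C * (1 - b))))"
proof -
  have "A / (B * (1 - a) * C) + b * (A / (B * (C * (1 - b)))) = (A*(1-b) + b*A*(1-a)) / (B * (1 - a) * (C * (1 - b)))"
    using assms by (simp add: add_divide_distrib)
  also have "A*(1-b) + b*A*(1-a) = A * (1 - a*b)" by (simp add: algebra_simps)
  finally show ?thesis by simp
qed

locale qq =
  fixes q :: complex
  assumes qnz: "q \<noteq> 0" and qpow: "\<And>k::nat. k \<ge> 1 \<Longrightarrow> q ^ k \<noteq> 1"
begin

lemma Pq_nz: "P q q k \<noteq> 0"
proof (rule P_nz)
  fix i assume "i < k"
  have "q * q ^ i = q ^ Suc i" by simp
  then show "q * q ^ i \<noteq> 1" using qpow[of "Suc i"] by simp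
qed

lemma qpow_ne: "k \<ge> 1 \<Longrightarrow> 1 - q ^ k \<noteq> 0" using qpow by auto
lemma qSuc_ne[simp]: "q * q ^ k \<noteq> 1" using qpow[of "Suc k"] by simp

lemma qb_0[simp]: "qb q n 0 = 1" using Pq_nz by (simp add: qb_def)
lemma qb_gt[simp]: "k > n \<Longrightarrow> qb q n k = 0" by (simp add: qb_def)
lemma qb_0n[simp]: "qb q 0 k = (if k = 0 then 1 else 0)" by (simp add: qb_def)

lemma pascal_cases:
  assumes "Suc k \<le> m"
  obtains t where "m - k = Suc t" "m - Suc k = t"
    "qb q (Suc m) (Suc k) = P q q m * (1 - q^Suc k * q^Suc t) / (P q q k * (1 - q ^ Suc k) * (P q q t * (1 - q^Suc t)))"
    "qb q m (Suc k) = P q q m / (P q q k * (1 - q ^ Suc k) * P q q t)"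
    "qb q m k = P q q m / (P q q k * (P q q t * (1 - q^Suc t)))"
proof -
  obtain t where t: "m - k = Suc t" and mt: "m - Suc k = t"
    using assms by (metis Suc_diff_Suc Suc_le_lessD diff_Suc_Suc)
  have kt: "k + Suc t = m" using assms t by arith
  have e: "q ^ Suc k * q ^ Suc t = q ^ Suc m" using kt
    by (metis add_Suc power_add)
  show ?thesis
  proof (rule that[OF t mt])
    show "qb q (Suc m) (Suc k) = P q q m * (1 - q^Suc k * q^Suc t) / (P q q k * (1 - q ^ Suc k) * (P q q t * (1 - q^Suc t)))"
      unfolding e using assms t by (simp add: qb_def P_Suc)
    show "qb q m (Suc k) = P q q m / (P q q k * (1 - q ^ Suc k) * P q q t)"
      using assms mt by (simp add: qb_def P_Suc)
    show "qb q m k = P q q m / (P q q k * (P q q t * (1 - q^Suc t)))"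
      using assms t by (simp add: qb_def P_Suc)
  qed
qed

lemma pascal1: "qb q (Suc m) (Suc k) = q ^ Suc k * qb q m (Suc k) + qb q m k"
proof (cases "Suc k \<le> m")
  case True
  then obtain t where "m - k = Suc t" "m - Suc k = t"
    and h1: "qb q (Suc m) (Suc k) = P q q m * (1 - q^Suc k * q^Suc t) / (P q q k * (1 - q ^ Suc k) * (P q q t * (1 - q^Suc t)))"
    and h2: "qb q m (Suc k) = P q q m / (P q q k * (1 - q ^ Suc k) * P q q t)"
    and h3: "qb q m k = P q q m / (P q q k * (P q q t * (1 - q^Suc t)))"
    by (rule pascal_cases)
  show ?thesis unfolding h1 h2 h3
    by (rule pascal_alg) (use Pq_nz qpow_ne in auto)
next
  case False
  then show ?thesis
  proof (cases "k = m")
    case True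
    then show ?thesis using Pq_nz by (simp add: qb_def)
  next
    case False
    with \<open>\<not> Suc k \<le> m\<close> show ?thesis by simp
  qed
qed

lemma pascal2: "qb q (Suc m) (Suc k) = qb q m (Suc k) + q ^ (m - k) * qb q m k"
proof (cases "Suc k \<le> m")
  case True
  then obtain t where t: "m - k = Suc t" "m - Suc k = t"
    and h1: "qb q (Suc m) (Suc k) = P q q m * (1 - q^Suc k * q^Suc t) / (P q q k * (1 - q ^ Suc k) * (P q q t * (1 - q^Suc t)))"
    and h2: "qb q m (Suc k) = P q q m / (P q q k * (1 - q ^ Suc k) * P q q t)"
    and h3: "qb q m k = P q q m / (P q q k * (P q q t * (1 - q^Suc t)))"
    by (rule pascal_cases)
  show ?thesis unfolding h1 h2 h3 t(1)
    by (rule pascal_alg2) (use Pq_nz qpow_ne in auto)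
next
  case False
  then show ?thesis
  proof (cases "k = m")
    case True
    then show ?thesis using Pq_nz by (simp add: qb_def)
  next
    case False
    with \<open>\<not> Suc k \<le> m\<close> show ?thesis by simp
  qed
qed

lemma qb_SucP: "qb q (Suc n) (Suc k) * P q q (Suc k) = (1 - q ^ Suc n) * qb q n k * P q q k"
proof (cases "k \<le> n")
  case True
  then have "Suc n - Suc k = n - k" by simp
  then show ?thesis using True Pq_nz[of k] Pq_nz[of "Suc k"] Pq_nz[of "n-k"]
    by (simp add: qb_def P_Suc field_simps)
qed simp

lemma L1: "(\<Sum>j\<le>N. qb q N j * x^j * q^(j*j) * P (x*q^Suc j) q (N-j)) = 1"
proof (induction N arbitrary: x)
  case 0 then show ?case by simp
next
  case (Suc N)
  define g where "g x j = qb q N j * x^j * q^(j*j) * P (x*q^Suc j) q (N-j)" for x j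
  define h where "h j = qb q N j * x^j * q^(j*j) * P (x*q^Suc j) q (Suc N-j)" for j
  define b where "b j = q^(N-j) * qb q N j * x^Suc j * q^(Suc j*Suc j) * P (x*q^Suc (Suc j)) q (N-j)" for j
  have "(\<Sum>j\<le>Suc N. qb q (Suc N) j * x^j * q^(j*j) * P (x*q^Suc j) q (Suc N-j))
      = h 0 + (\<Sum>j\<le>N. h (Suc j) + b j)"
    by (subst sum.atMost_Suc_shift) (simp add: h_def b_def pascal2 algebra_simps)
  also have "\<dots> = (\<Sum>j\<le>Suc N. h j) + (\<Sum>j\<le>N. b j)"
    by (simp only: sum.distrib sum.atMost_Suc_shift[of h] add.assoc)
  also have "(\<Sum>j\<le>Suc N. h j) = (1 - x*q^Suc N) * (\<Sum>j\<le>N. g x j)"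
  proof -
    have "(\<Sum>j\<le>Suc N. h j) = (\<Sum>j\<le>N. h j)" by (simp add: h_def)
    also have "\<dots> = (\<Sum>j\<le>N. (1 - x*q^Suc N) * g x j)"
    proof (rule sum.cong[OF refl])
      fix j assume "j \<in> {..N}"
      then have j: "j \<le> N" by simp
      then have "Suc N - j = Suc (N - j)" by simp
      moreover have "x * q ^ Suc j * q ^ (N - j) = x * q ^ Suc N"
        using j by (simp add: mult.assoc power_add[symmetric])
      ultimately show "h j = (1 - x*q^Suc N) * g x j"
        by (simp add: h_def g_def P_Suc)
    qed
    finally show ?thesis by (simp add: sum_distrib_left)
  qed
  also have "(\<Sum>j\<le>N. b j) = x*q^Suc N * (\<Sum>j\<le>N. g (x*q) j)"
  proof -
    have "(\<Sum>j\<le>N. b j) = (\<Sum>j\<le>N. x*q^Suc N * g (x*q) j)"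
    proof (rule sum.cong[OF refl])
      fix j assume "j \<in> {..N}"
      then have j: "j \<le> N" by simp
      have e: "(N - j) + Suc j * Suc j = Suc N + j + j * j" using j
        by (simp add: algebra_simps)
      have "q^(N-j) * q^(Suc j * Suc j) = q^Suc N * q^j * q^(j*j)"
        using e by (metis power_add)
      moreover have "x * q ^ Suc (Suc j) = x * q * q ^ Suc j" by simp
      ultimately show "b j = x*q^Suc N * g (x*q) j"
        unfolding b_def g_def
        by (simp add: power_mult_distrib algebra_simps) blast
    qed
    then show ?thesis by (simp add: sum_distrib_left)
  qed
  finally show ?case using Suc.IH[of x] Suc.IH[of "x*q"] unfolding g_def
    by (simp add: algebra_simps)
qed

lemma pascal1': "qb q (Suc m) k = q^k * qb q m k + (if k = 0 then 0 else qb q m (k - 1))"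
  by (cases k) (simp_all add: pascal1)

lemma pascal2': "qb q (Suc m) k = qb q m k + (if k = 0 then 0 else q^(Suc m - k) * qb q m (k - 1))"
  by (cases k) (simp_all add: pascal2)

lemma sum_delta0: "(\<Sum>k\<le>n. f k * qb q 0 k) = f 0"
proof -
  have "(\<Sum>k\<le>n. f k * qb q 0 k) = (\<Sum>k\<le>n. if k = 0 then f 0 else 0)"
    by (rule sum.cong) auto
  then show ?thesis by simp
qed

lemma L2: "(\<Sum>k\<le>n. q^((n-k)*(m-k)) * qb q n k * qb q m k * P q q k * P (c*q^k) q (n-k)) = P (c*q^m) q n"
proof (induction m arbitrary: n c)
  case 0
  have "(\<Sum>k\<le>n. q^((n-k)*(0-k)) * qb q n k * qb q 0 k * P q q k * P (c*q^k) q (n-k))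
     = (\<Sum>k\<le>n. (q^((n-k)*(0-k)) * qb q n k * P q q k * P (c*q^k) q (n-k)) * qb q 0 k)"
    by (rule sum.cong) (auto simp: ac_simps)
  then show ?case by (simp only: sum_delta0) simp
next
  case (Suc m)
  define T where "T n c k = q^((n-k)*(m-k)) * qb q n k * qb q m k * P q q k * P (c*q^k) q (n-k)" for n c k
  define v where "v k = (if k = 0 then 0 else q^((n-k)*(Suc m-k)) * qb q n k * qb q m (k-1) * P q q k * P (c*q^k) q (n-k))" for k
  have "(\<Sum>k\<le>n. q^((n-k)*(Suc m-k)) * qb q n k * qb q (Suc m) k * P q q k * P (c*q^k) q (n-k))
      = (\<Sum>k\<le>n. q^n * T n c k + v k)"
  proof (rule sum.cong[OF refl])
    fix k assume "k \<in> {..n}"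
    then have kn: "k \<le> n" by simp
    show "q^((n-k)*(Suc m-k)) * qb q n k * qb q (Suc m) k * P q q k * P (c*q^k) q (n-k) = q^n * T n c k + v k"
    proof (cases "k \<le> m")
      case True
      have f1: "q^((n-k)*(Suc m-k)) = q^(n-k) * q^((n-k)*(m-k))" using True
        by (simp add: Suc_diff_le power_add)
      have f2: "q^n = q^(n-k) * q^k" using kn by (simp add: power_add[symmetric])
      show ?thesis unfolding T_def v_def pascal1' f1 f2
        by (cases "k=0") (simp_all add: algebra_simps)
    next
      case False then show ?thesis unfolding T_def v_def pascal1' by simp
    qed
  qed
  also have "\<dots> = q^n * P (c*q^m) q n + (\<Sum>k\<le>n. v k)"
    using Suc.IH[of n c] by (simp add: sum.distrib T_def sum_distrib_left[symmetric])
  also have "(\<Sum>k\<le>n. v k) = (if n = 0 then 0 else (1 - q^n) * P (c*q^Suc m) q (n - 1))"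
  proof (cases n)
    case 0 then show ?thesis by (simp add: v_def)
  next
    case (Suc n')
    have vS: "v (Suc i) = (1 - q^Suc n') * T n' (c*q) i" for i
    proof -
      have "v (Suc i) = (qb q (Suc n') (Suc i) * P q q (Suc i)) * (q^((n'-i)*(m-i)) * qb q m i * P (c*q*q^i) q (n'-i))"
        unfolding v_def Suc by (simp add: ac_simps)
      also have "\<dots> = ((1 - q^Suc n') * qb q n' i * P q q i) * (q^((n'-i)*(m-i)) * qb q m i * P (c*q*q^i) q (n'-i))"
        by (simp only: qb_SucP)
      also have "\<dots> = (1 - q ^ Suc n') * T n' (c * q) i"
        by (simp add: T_def ac_simps)
      finally show ?thesis .
    qed
    have "(\<Sum>k\<le>n. v k) = (\<Sum>i\<le>n'. (1 - q^n) * T n' (c*q) i)"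
      unfolding Suc sum.atMost_Suc_shift vS by (simp add: v_def)
    also have "\<dots> = (1 - q^n) * P (c*q*q^m) q n'"
      using Suc.IH[of n' "c*q"] by (simp add: T_def sum_distrib_left[symmetric])
    finally show ?thesis using Suc by (simp add: ac_simps)
  qed
  also have "q^n * P (c*q^m) q n + (if n = 0 then 0 else (1 - q^n) * P (c*q^Suc m) q (n - 1)) = P (c*q^Suc m) q n"
  proof (cases n)
    case (Suc n')
    have a: "P (c*q^m) q (Suc n') = (1 - c*q^m) * P (c*q^Suc m) q n'"
      unfolding P_Suc' by (simp add: ac_simps)
    have b: "P (c*q^Suc m) q (Suc n') = P (c*q^Suc m) q n' * (1 - c*q^Suc m * q^n')"
      by (simp add: P_Suc)
    have e: "q^Suc m * q^n' = q^Suc n' * q^m" by (simp add: power_add[symmetric] add.commute)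
    have "P (c*q^Suc m) q n' * (1 - c*q^Suc m * q^n') = P (c*q^Suc m) q n' * (1 - c*(q^Suc n' * q^m))"
      using e by (simp add: mult.assoc)
    then show ?thesis unfolding Suc a b
      by (simp add: algebra_simps)
  qed simp
  finally show ?case .
qed

lemma L3: "(\<Sum>k\<le>n. x^k * q^(k*k) * qb q n k * qb q m k * P q q k * P (x*q^Suc k) q (n-k)) = P (x*q^Suc m) q n"
proof (induction m arbitrary: n x)
  case 0
  have "(\<Sum>k\<le>n. x^k * q^(k*k) * qb q n k * qb q 0 k * P q q k * P (x*q^Suc k) q (n-k))
     = (\<Sum>k\<le>n. (x^k * q^(k*k) * qb q n k * P q q k * P (x*q^Suc k) q (n-k)) * qb q 0 k)"
    by (rule sum.cong) (auto simp: ac_simps)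
  then show ?case by (simp only: sum_delta0) simp
next
  case (Suc m)
  define T where "T n x k = x^k * q^(k*k) * qb q n k * qb q m k * P q q k * P (x*q^Suc k) q (n-k)" for n x k
  define v where "v k = (if k = 0 then 0 else x^k * q^(k*k) * qb q n k * (q^(Suc m - k) * qb q m (k-1)) * P q q k * P (x*q^Suc k) q (n-k))" for k
  have "(\<Sum>k\<le>n. x^k * q^(k*k) * qb q n k * qb q (Suc m) k * P q q k * P (x*q^Suc k) q (n-k))
      = (\<Sum>k\<le>n. T n x k + v k)"
  proof (rule sum.cong[OF refl])
    fix k show "x^k * q^(k*k) * qb q n k * qb q (Suc m) k * P q q k * P (x*q^Suc k) q (n-k) = T n x k + v k"
      by (cases "k = 0") (simp_all add: T_def v_def pascal2' algebra_simps)
  qed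
  also have "\<dots> = P (x*q^Suc m) q n + (\<Sum>k\<le>n. v k)"
    using Suc.IH[where n=n and x=x] by (simp add: sum.distrib T_def)
  also have "(\<Sum>k\<le>n. v k) = (if n = 0 then 0 else (1 - q^n) * (x*q^Suc m) * P (x*q*q^Suc m) q (n - 1))"
  proof (cases n)
    case 0 then show ?thesis by (simp add: v_def)
  next
    case (Suc n')
    have vS: "v (Suc i) = (1 - q^Suc n') * (x*q^Suc m) * T n' (x*q) i" for i
    proof (cases "i \<le> m")
      case True
      have ex: "Suc i * Suc i + (m - i) = Suc m + i + i * i" using True by (simp add: algebra_simps)
      have f: "x^Suc i * q^(Suc i*Suc i) * q^(m-i) = x*q^Suc m*((x*q)^i*q^(i*i))"
      proof -
        have "q^(Suc i*Suc i) * q^(m-i) = q^Suc m * q^i * q^(i*i)"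
          using ex by (metis power_add)
        then show ?thesis by (simp add: power_mult_distrib ac_simps) blast
      qed
      have "v (Suc i) = (qb q (Suc n') (Suc i) * P q q (Suc i)) * (x^Suc i * q^(Suc i*Suc i) * q^(m-i)) * (qb q m i * P (x*q*q^Suc i) q (n'-i))"
        unfolding v_def Suc by (simp add: ac_simps)
      also have "\<dots> = ((1 - q^Suc n') * qb q n' i * P q q i) * (x*q^Suc m*((x*q)^i*q^(i*i))) * (qb q m i * P (x*q*q^Suc i) q (n'-i))"
        by (simp only: qb_SucP f)
      also have "\<dots> = (1 - q^Suc n') * (x*q^Suc m) * T n' (x*q) i"
        by (simp add: T_def ac_simps)
      finally show ?thesis .
    next
      case False
      then show ?thesis by (simp add: v_def T_def Suc)
    qed
    have "(\<Sum>k\<le>n. v k) = (\<Sum>i\<le>n'. (1 - q^n) * (x*q^Suc m) * T n' (x*q) i)"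
      unfolding Suc sum.atMost_Suc_shift vS by (simp add: v_def)
    also have "\<dots> = (1 - q^n) * (x*q^Suc m) * P (x*q*q^Suc m) q n'"
      using Suc.IH[where n=n' and x="x*q"] by (simp add: T_def sum_distrib_left[symmetric])
    finally show ?thesis using Suc by (simp add: ac_simps)
  qed
  also have "P (x*q^Suc m) q n + (if n = 0 then 0 else (1 - q^n) * (x*q^Suc m) * P (x*q*q^Suc m) q (n - 1)) = P (x*q^Suc (Suc m)) q n"
  proof (cases n)
    case (Suc n')
    have a: "P (x*q^Suc m) q (Suc n') = (1 - x*q^Suc m) * P (x*q^Suc (Suc m)) q n'"
      unfolding P_Suc' by (simp add: ac_simps)
    have b: "P (x*q^Suc (Suc m)) q (Suc n') = P (x*q^Suc (Suc m)) q n' * (1 - x*q^Suc (Suc m) * q^n')"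
      by (simp add: P_Suc)
    have e: "q^Suc (Suc m) * q^n' = q^Suc m * q^Suc n'" by (simp add: power_add[symmetric] add.commute)
    have c: "x*q*q^Suc m = x*q^Suc (Suc m)" by simp
    have "P (x*q^Suc (Suc m)) q n' * (1 - x*q^Suc (Suc m) * q^n') = P (x*q^Suc (Suc m)) q n' * (1 - x*(q^Suc m * q^Suc n'))"
      using e by (simp add: mult.assoc)
    then show ?thesis unfolding Suc a b c
      by (simp add: algebra_simps)
  qed simp
  finally show ?case .
qed

lemma P_ratio: "k \<le> N \<Longrightarrow> P x q k \<noteq> 0 \<Longrightarrow> P (x*q^k) q (N-k) = P x q N / P x q k"
  using P_add[of x q k "N-k"] by simp

lemma P_nz': "\<forall>t. x * q^t \<noteq> 1 \<Longrightarrow> P x q k \<noteq> 0"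
  by (rule P_nz) auto

lemma qb_eq: "k \<le> n \<Longrightarrow> qb q n k = P q q n / (P q q k * P q q (n-k))"
  by (simp add: qb_def)

lemma F1:
  assumes hx: "\<forall>t. x*q*q^t \<noteq> 1"
  shows "(\<Sum>j\<le>N. x^j*q^(j*j)/(P q q (N-j)*P q q j*P (x*q) q j)) = 1/(P q q N * P (x*q) q N)"
proof -
  have nz: "P (x*q) q k \<noteq> 0" for k using hx by (intro P_nz') (simp add: mult.assoc)
  have "(\<Sum>j\<le>N. qb q N j * x^j * q^(j*j) * P (x*q^Suc j) q (N-j))
      = (\<Sum>j\<le>N. (P q q N * P (x*q) q N) * (x^j*q^(j*j)/(P q q (N-j)*P q q j*P (x*q) q j)))"
  proof (rule sum.cong[OF refl])
    fix j assume "j \<in> {..N}"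
    then have j: "j \<le> N" by simp
    have "P (x*q^Suc j) q (N-j) = P (x*q) q N / P (x*q) q j"
      using P_ratio[OF j nz[of j], of ] by (simp add: ac_simps)
    then show "qb q N j * x^j * q^(j*j) * P (x*q^Suc j) q (N-j) = (P q q N * P (x*q) q N) * (x^j*q^(j*j)/(P q q (N-j)*P q q j*P (x*q) q j))"
      using j nz[of j] Pq_nz[of j] Pq_nz[of "N-j"] by (simp add: qb_eq field_simps)
  qed
  then have "(P q q N * P (x*q) q N) * (\<Sum>j\<le>N. x^j*q^(j*j)/(P q q (N-j)*P q q j*P (x*q) q j)) = 1"
    using L1[of N x] by (simp add: sum_distrib_left)
  then show ?thesis using nz[of N] Pq_nz[of N] by (simp add: field_simps)
qed

lemma F2:
  assumes hc: "\<forall>t. c*q^t \<noteq> 1"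
  shows "P c q (r+s)/(P q q r*P q q s*P c q r*P c q s) = (\<Sum>k\<le>r. if k \<le> s then q^((r-k)*(s-k))/(P q q (r-k)*P q q (s-k)*P q q k*P c q k) else 0)"
proof -
  have nz: "P c q k \<noteq> 0" for k using hc by (intro P_nz')
  have "(\<Sum>k\<le>r. q^((r-k)*(s-k)) * qb q r k * qb q s k * P q q k * P (c*q^k) q (r-k))
      = (\<Sum>k\<le>r. (P q q r * P q q s * P c q r) * (if k \<le> s then q^((r-k)*(s-k))/(P q q (r-k)*P q q (s-k)*P q q k*P c q k) else 0))"
  proof (rule sum.cong[OF refl])
    fix k assume "k \<in> {..r}"
    then have k: "k \<le> r" by simp
    have "P (c*q^k) q (r-k) = P c q r / P c q k" using P_ratio[OF k nz[of k]] .
    then show "q^((r-k)*(s-k)) * qb q r k * qb q s k * P q q k * P (c*q^k) q (r-k) = (P q q r * P q q s * P c q r) * (if k \<le> s then q^((r-k)*(s-k))/(P q q (r-k)*P q q (s-k)*P q q k*P c q k) else 0)"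
      using k nz[of k] Pq_nz[of k] Pq_nz[of "r-k"] Pq_nz[of "s-k"] by (simp add: qb_eq field_simps)
  qed
  then have "(P q q r * P q q s * P c q r) * (\<Sum>k\<le>r. if k \<le> s then q^((r-k)*(s-k))/(P q q (r-k)*P q q (s-k)*P q q k*P c q k) else 0) = P (c*q^s) q r"
    using L2[of r s c] by (simp add: sum_distrib_left)
  moreover have "P c q (r+s) = P c q s * P (c*q^s) q r" using P_add[of c q s r] by (simp add: add.commute)
  ultimately show ?thesis using nz[of r] nz[of s] Pq_nz[of r] Pq_nz[of s] by (simp add: field_simps)
qed

lemma F3:
  assumes hx: "\<forall>t. x*q*q^t \<noteq> 1"
  shows "(\<Sum>k\<le>n. if k \<le> m then x^k*q^(k*k)/(P q q k*P (x*q) q k*P q q (n-k)*P q q (m-k)) else 0)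
      = P (x*q) q (n+m)/(P q q n*P q q m*P (x*q) q n*P (x*q) q m)"
proof -
  have nz: "P (x*q) q k \<noteq> 0" for k using hx by (intro P_nz') (simp add: mult.assoc)
  have "(\<Sum>k\<le>n. x^k * q^(k*k) * qb q n k * qb q m k * P q q k * P (x*q^Suc k) q (n-k))
      = (\<Sum>k\<le>n. (P q q n * P q q m * P (x*q) q n) * (if k \<le> m then x^k*q^(k*k)/(P q q k*P (x*q) q k*P q q (n-k)*P q q (m-k)) else 0))"
  proof (rule sum.cong[OF refl])
    fix k assume "k \<in> {..n}"
    then have k: "k \<le> n" by simp
    have "P (x*q^Suc k) q (n-k) = P (x*q) q n / P (x*q) q k"
      using P_ratio[OF k nz[of k]] by (simp add: ac_simps)
    then show "x^k * q^(k*k) * qb q n k * qb q m k * P q q k * P (x*q^Suc k) q (n-k) = (P q q n * P q q m * P (x*q) q n) * (if k \<le> m then x^k*q^(k*k)/(P q q k*P (x*q) q k*P q q (n-k)*P q q (m-k)) else 0)"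
      using k nz[of k] Pq_nz[of k] Pq_nz[of "n-k"] Pq_nz[of "m-k"] by (simp add: qb_eq field_simps)
  qed
  then have "(P q q n * P q q m * P (x*q) q n) * (\<Sum>k\<le>n. if k \<le> m then x^k*q^(k*k)/(P q q k*P (x*q) q k*P q q (n-k)*P q q (m-k)) else 0) = P (x*q^Suc m) q n"
    using L3[of x n m] by (simp add: sum_distrib_left)
  moreover have "P (x*q) q (n+m) = P (x*q) q m * P (x*q^Suc m) q n" using P_add[of "x*q" q m n] by (simp add: add.commute ac_simps)
  ultimately show ?thesis using nz[of n] nz[of m] Pq_nz[of n] Pq_nz[of m] by (simp add: field_simps)
qed

lemma sum_ge_shift:
  fixes n k :: nat and f :: "nat \<Rightarrow> complex"
  assumes "k \<le> n"
  shows "(\<Sum>r\<le>n. if k \<le> r then f r else 0) = (\<Sum>j\<le>n-k. f (k+j))"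
proof -
  have "(\<Sum>r\<le>n. if k \<le> r then f r else 0) = sum f {r\<in>{..n}. k \<le> r}"
    using sum.inter_filter[of "{..n}" f "\<lambda>r. k \<le> r"] by simp
  also have "{r\<in>{..n}. k \<le> r} = {0+k..(n-k)+k}" using assms by auto
  also have "sum f {0+k..(n-k)+k} = (\<Sum>j=0..n-k. f (j+k))" by (rule sum.shift_bounds_cl_nat_ivl)
  also have "\<dots> = (\<Sum>j\<le>n-k. f (k+j))" by (simp add: atLeast0AtMost add.commute)
  finally show ?thesis .
qed

lemma sumX:
  assumes ha: "\<forall>t. a*q*q^t \<noteq> 1" and a0: "a \<noteq> 0" and k: "k \<le> n"
  shows "(\<Sum>r\<le>n. if k \<le> r then a^r*q^(r*r-k*r)/(P q q (n-r)*P q q (r-k)*P (a*q) q r) else 0) = a^k/(P q q (n-k)*P (a*q) q n)"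
proof -
  define x where "x = a*q^k"
  have hx: "\<forall>t. x*q*q^t \<noteq> 1"
  proof
    fix t have eq: "x*q*q^t = a*q*q^(k+t)" by (simp add: x_def power_add ac_simps)
    show "x*q*q^t \<noteq> 1" unfolding eq using ha by blast
  qed
  have nz: "P (a*q) q j \<noteq> 0" for j using ha by (intro P_nz') (simp add: mult.assoc)
  have nzx: "P (x*q) q j \<noteq> 0" for j using hx by (intro P_nz') (simp add: mult.assoc)
  have "(\<Sum>r\<le>n. if k \<le> r then a^r*q^(r*r-k*r)/(P q q (n-r)*P q q (r-k)*P (a*q) q r) else 0)
     = (\<Sum>j\<le>n-k. a^(k+j)*q^((k+j)*(k+j)-k*(k+j))/(P q q (n-(k+j))*P q q (k+j-k)*P (a*q) q (k+j)))"
    by (rule sum_ge_shift[OF k])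
  also have "\<dots> = (\<Sum>j\<le>n-k. (a^k/P (a*q) q k) * (x^j*q^(j*j)/(P q q (n-k-j)*P q q j*P (x*q) q j)))"
  proof (rule sum.cong[OF refl])
    fix j assume "j \<in> {..n-k}"
    have e1: "(k+j)*(k+j)-k*(k+j) = j*j + k*j" by (simp add: algebra_simps)
    have e2: "P (a*q) q (k+j) = P (a*q) q k * P (x*q) q j" unfolding P_add x_def by (simp add: ac_simps)
    have e3: "x^j = a^j * q^(k*j)" by (simp add: x_def power_mult_distrib power_mult)
    show "a^(k+j)*q^((k+j)*(k+j)-k*(k+j))/(P q q (n-(k+j))*P q q (k+j-k)*P (a*q) q (k+j)) = (a^k/P (a*q) q k) * (x^j*q^(j*j)/(P q q (n-k-j)*P q q j*P (x*q) q j))"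
      unfolding e1 e2 e3 using nz[of k] nzx[of j] Pq_nz[of j] Pq_nz[of "n-k-j"]
      by (simp add: power_add field_simps diff_diff_add)
  qed
  also have "\<dots> = (a^k/P (a*q) q k) * (\<Sum>j\<le>n-k. x^j*q^(j*j)/(P q q (n-k-j)*P q q j*P (x*q) q j))"
    by (rule sum_distrib_left[symmetric])
  also have "\<dots> = (a^k/P (a*q) q k) * (1/(P q q (n-k) * P (x*q) q (n-k)))"
    by (simp only: F1[OF hx])
  also have "P (a*q) q k * P (x*q) q (n-k) = P (a*q) q n"
    using P_add[of "a*q" q k "n-k"] k by (simp add: x_def ac_simps)
  then have "(a^k/P (a*q) q k) * (1/(P q q (n-k) * P (x*q) q (n-k))) = a^k/(P q q (n-k)*P (a*q) q n)"
    using nz[of k] nzx[of "n-k"] Pq_nz[of "n-k"] by (simp add: field_simps)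
  finally show ?thesis .
qed

lemma exp_id:
  fixes r s k :: nat
  assumes "k \<le> r" "k \<le> s"
  shows "(r*r+s*s-r*s) + (r-k)*(s-k) = (r*r-k*r) + (s*s-k*s) + k*k"
proof -
  obtain r' s' where r: "r = k + r'" and s: "s = k + s'" using assms le_Suc_ex by blast
  have a: "r*s \<le> r*r+s*s"
  proof (cases "r \<le> s")
    case True then have "r*s \<le> s*s" by (simp add: mult_le_mono1)
    then show ?thesis by linarith
  next
    case False then have "r*s \<le> r*r" by (simp add: mult_le_mono2)
    then show ?thesis by linarith
  qed
  have f1: "k*r \<le> r*r" using assms by (simp add: mult_le_mono1)
  have f2: "k*s \<le> s*s" using assms by (simp add: mult_le_mono1)
  have "int ((r*r+s*s-r*s) + (r-k)*(s-k)) = int ((r*r-k*r) + (s*s-k*s) + k*k)"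
    using a f1 f2 assms apply (simp only: of_nat_add of_nat_mult of_nat_diff)
    by (simp add: algebra_simps)
  then show ?thesis by linarith
qed

lemma core:
  assumes ha: "\<forall>t. a*q*q^t \<noteq> 1" and hb: "\<forall>t. b*q*q^t \<noteq> 1" and hc: "\<forall>t. a*b*q*q^t \<noteq> 1"
    and a0: "a \<noteq> 0" and b0: "b \<noteq> 0"
  shows "(\<Sum>r\<le>n. \<Sum>s\<le>m. a^r * b^s * q^(r*r+s*s-r*s) / (P q q (n-r) * P q q (m-s)) *
            (P (a*b*q) q (r+s) / (P q q r * P (a*q) q r * P (a*b*q) q r * P q q s * P (b*q) q s * P (a*b*q) q s)))
     = P (a*b*q) q (n+m) / (P q q n * P (a*q) q n * P (a*b*q) q n * P q q m * P (b*q) q m * P (a*b*q) q m)"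
proof -
  define c where "c = a*b*q"
  have hc': "\<forall>t. c*q^t \<noteq> 1" using hc by (simp add: c_def)
  have nza: "P (a*q) q j \<noteq> 0" for j using ha by (intro P_nz') (simp add: mult.assoc)
  have nzb: "P (b*q) q j \<noteq> 0" for j using hb by (intro P_nz') (simp add: mult.assoc)
  have nzc: "P c q j \<noteq> 0" for j using hc' by (intro P_nz')
  define X where "X k r = (if k \<le> r then a^r*q^(r*r-k*r)/(P q q (n-r)*P q q (r-k)*P (a*q) q r) else 0)" for k r
  define Y where "Y k s = (if k \<le> s then b^s*q^(s*s-k*s)/(P q q (m-s)*P q q (s-k)*P (b*q) q s) else 0)" for k s
  define Z where "Z k = q^(k*k)/(P q q k*P c q k)" for k
  have step1: "a^r * b^s * q^(r*r+s*s-r*s) / (P q q (n-r) * P q q (m-s)) *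
            (P (a*b*q) q (r+s) / (P q q r * P (a*q) q r * P (a*b*q) q r * P q q s * P (b*q) q s * P (a*b*q) q s))
      = (\<Sum>k\<le>n. X k r * Y k s * Z k)" if rn: "r \<le> n" for r s
  proof -
    define pref where "pref = a^r * b^s * q^(r*r+s*s-r*s) / (P q q (n-r) * P q q (m-s) * P (a*q) q r * P (b*q) q s)"
    have "a^r * b^s * q^(r*r+s*s-r*s) / (P q q (n-r) * P q q (m-s)) *
            (P (a*b*q) q (r+s) / (P q q r * P (a*q) q r * P (a*b*q) q r * P q q s * P (b*q) q s * P (a*b*q) q s))
        = pref * (P c q (r+s)/(P q q r*P q q s*P c q r*P c q s))"
      unfolding pref_def c_def using nza[of r] nzb[of s] nzc[of r] nzc[of s] Pq_nz[of r] Pq_nz[of s]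
        Pq_nz[of "n-r"] Pq_nz[of "m-s"]
      by (simp add: c_def[symmetric] field_simps)
    also have "\<dots> = pref * (\<Sum>k\<le>r. if k \<le> s then q^((r-k)*(s-k))/(P q q (r-k)*P q q (s-k)*P q q k*P c q k) else 0)"
      by (simp only: F2[OF hc'])
    also have "\<dots> = (\<Sum>k\<le>r. pref * (if k \<le> s then q^((r-k)*(s-k))/(P q q (r-k)*P q q (s-k)*P q q k*P c q k) else 0))"
      by (rule sum_distrib_left)
    also have "\<dots> = (\<Sum>k\<le>n. if k \<le> r then pref * (if k \<le> s then q^((r-k)*(s-k))/(P q q (r-k)*P q q (s-k)*P q q k*P c q k) else 0) else 0)"
    proof -
      have "{k\<in>{..n}. k \<le> r} = {..r}" using rn by auto
      then show ?thesis
        using sum.inter_filter[of "{..n}" "\<lambda>k. pref * (if k \<le> s then q^((r-k)*(s-k))/(P q q (r-k)*P q q (s-k)*P q q k*P c q k) else 0)" "\<lambda>k. k \<le> r"]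
        by simp
    qed
    also have "\<dots> = (\<Sum>k\<le>n. X k r * Y k s * Z k)"
    proof (rule sum.cong[OF refl])
      fix k assume "k \<in> {..n}"
      show "(if k \<le> r then pref * (if k \<le> s then q^((r-k)*(s-k))/(P q q (r-k)*P q q (s-k)*P q q k*P c q k) else 0) else 0) = X k r * Y k s * Z k"
      proof (cases "k \<le> r \<and> k \<le> s")
        case True
        have qe: "q^((r-k)*(s-k)) = q^(r*r-k*r) * q^(s*s-k*s) * q^(k*k) / q^(r*r+s*s-r*s)"
          using exp_id[of k r s] True qnz by (simp add: power_add[symmetric] field_simps)
        show ?thesis unfolding X_def Y_def Z_def pref_def qe using True
          nza[of r] nzb[of s] nzc[of k] Pq_nz[of k] Pq_nz[of "r-k"] Pq_nz[of "s-k"]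
          Pq_nz[of "n-r"] Pq_nz[of "m-s"] qnz
          by (simp add: field_simps)
      next
        case False
        then show ?thesis unfolding X_def Y_def by auto
      qed
    qed
    finally show ?thesis .
  qed
  have "(\<Sum>r\<le>n. \<Sum>s\<le>m. a^r * b^s * q^(r*r+s*s-r*s) / (P q q (n-r) * P q q (m-s)) *
            (P (a*b*q) q (r+s) / (P q q r * P (a*q) q r * P (a*b*q) q r * P q q s * P (b*q) q s * P (a*b*q) q s)))
      = (\<Sum>r\<le>n. \<Sum>s\<le>m. \<Sum>k\<le>n. X k r * Y k s * Z k)"
    by (rule sum.cong[OF refl], rule sum.cong[OF refl], rule step1, simp)
  also have "\<dots> = (\<Sum>r\<le>n. \<Sum>k\<le>n. \<Sum>s\<le>m. X k r * Y k s * Z k)"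
    by (rule sum.cong[OF refl], rule sum.swap)
  also have "\<dots> = (\<Sum>k\<le>n. \<Sum>r\<le>n. \<Sum>s\<le>m. X k r * Y k s * Z k)"
    by (rule sum.swap)
  also have "\<dots> = (\<Sum>k\<le>n. Z k * (\<Sum>r\<le>n. X k r) * (\<Sum>s\<le>m. Y k s))"
    by (rule sum.cong[OF refl]) (simp add: sum_product sum_distrib_left ac_simps)
  also have "\<dots> = (\<Sum>k\<le>n. (1/(P (a*q) q n * P (b*q) q m)) * (if k \<le> m then (a*b)^k*q^(k*k)/(P q q k*P (a*b*q) q k*P q q (n-k)*P q q (m-k)) else 0))"
  proof (rule sum.cong[OF refl])
    fix k assume "k \<in> {..n}"
    then have kn: "k \<le> n" by simp
    have sx: "(\<Sum>r\<le>n. X k r) = a^k/(P q q (n-k)*P (a*q) q n)"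
      unfolding X_def by (rule sumX[OF ha a0 kn])
    show "Z k * (\<Sum>r\<le>n. X k r) * (\<Sum>s\<le>m. Y k s) = (1/(P (a*q) q n * P (b*q) q m)) * (if k \<le> m then (a*b)^k*q^(k*k)/(P q q k*P (a*b*q) q k*P q q (n-k)*P q q (m-k)) else 0)"
    proof (cases "k \<le> m")
      case True
      have sy: "(\<Sum>s\<le>m. Y k s) = b^k/(P q q (m-k)*P (b*q) q m)"
        unfolding Y_def by (rule sumX[OF hb b0 True])
      show ?thesis unfolding sx sy Z_def c_def using True
        nza[of n] nzb[of m] nzc[of k] Pq_nz[of k] Pq_nz[of "n-k"] Pq_nz[of "m-k"]
        by (simp add: c_def[symmetric] field_simps power_mult_distrib)
    next
      case False
      then have "(\<Sum>s\<le>m. Y k s) = 0" unfolding Y_def by (intro sum.neutral) auto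
      then show ?thesis using False by simp
    qed
  qed
  also have "\<dots> = (1/(P (a*q) q n * P (b*q) q m)) * (\<Sum>k\<le>n. if k \<le> m then (a*b)^k*q^(k*k)/(P q q k*P (a*b*q) q k*P q q (n-k)*P q q (m-k)) else 0)"
    by (rule sum_distrib_left[symmetric])
  also have "\<dots> = (1/(P (a*q) q n * P (b*q) q m)) * (P (a*b*q) q (n+m)/(P q q n*P q q m*P (a*b*q) q n*P (a*b*q) q m))"
    by (simp only: F3[OF hc])
  also have "\<dots> = P (a*b*q) q (n+m) / (P q q n * P (a*q) q n * P (a*b*q) q n * P q q m * P (b*q) q m * P (a*b*q) q m)"
    by (simp add: field_simps)
  finally show ?thesis .
qed

lemma qpoch_nat: "qpoch x q (int k) = P x q k"
  by (simp add: qpoch_def P_def)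

lemma qpoch_neg: "qpoch x q (- int j) = 1 / (\<Prod>l\<in>{1..j}. 1 - x / q ^ l)"
  by (cases "j = 0") (simp_all add: qpoch_def)

lemma qpoch_qq_neg: "d < 0 \<Longrightarrow> qpoch q q d = 0"
proof -
  assume "d < 0"
  then obtain j where j: "d = - int (Suc j)" using negD by blast
  have "(\<Prod>l\<in>{1..Suc j}. 1 - q / q ^ l) = 0"
    by (rule prod_zero) (use qnz in \<open>auto intro!: bexI[of _ 1]\<close>)
  then show ?thesis unfolding j qpoch_neg by simp
qed

lemma qpoch_step:
  assumes "x * q powi e \<noteq> 1"
  shows "qpoch x q (e+1) = qpoch x q e * (1 - x * q powi e)"
proof (cases "e \<ge> 0")
  case True
  then obtain j where j: "e = int j" by (metis nonneg_eq_int)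
  have "e + 1 = int (Suc j)" using j by simp
  then show ?thesis unfolding j by (simp only: qpoch_nat) (simp add: P_Suc)
next
  case False
  then obtain j where j: "e = - int (Suc j)" using negD[of e] by force
  have e1: "e + 1 = - int j" using j by simp
  have pw: "q powi e = 1 / q ^ Suc j" unfolding j power_int_minus power_int_of_nat by (simp add: divide_inverse)
  have f: "1 - x / q ^ Suc j \<noteq> 0" using assms pw by simp
  define Pi where "Pi = (\<Prod>l\<in>{1..j}. 1 - x / q ^ l)"
  define f where "f = 1 - x / q ^ Suc j"
  have fnz: "f \<noteq> 0" using f unfolding f_def .
  have "(\<Prod>l\<in>{1..Suc j}. 1 - x / q ^ l) = Pi * f"
    unfolding Pi_def f_def by (simp add: prod.cl_ivl_Suc)
  then have A: "qpoch x q e = 1 / (Pi * f)" unfolding j qpoch_neg by simp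
  have B: "qpoch x q (e+1) = 1 / Pi" unfolding e1 qpoch_neg Pi_def by simp
  have C: "1 - x * q powi e = f" unfolding pw f_def by simp
  show ?thesis unfolding A B C using fnz by (cases "Pi = 0") (simp_all add: field_simps)
qed

lemma QS:
  assumes hx: "\<forall>e. x * q powi e \<noteq> 1"
  shows "qpoch x q (d + int k) = qpoch x q d * P (x * q powi d) q k"
proof (induction k)
  case 0 then show ?case by simp
next
  case (Suc k)
  have "d + int (Suc k) = (d + int k) + 1" by simp
  then have "qpoch x q (d + int (Suc k)) = qpoch x q (d + int k) * (1 - x * q powi (d + int k))"
    using qpoch_step hx by presburger
  also have "x * q powi (d + int k) = x * q powi d * q ^ k"
    using qnz by (simp add: power_int_add)
  finally show ?case using Suc.IH by (simp add: P_Suc)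
qed

lemma qpi_add: "q powi a * q powi b = q powi (a + b)"
  using qnz by (simp add: power_int_add)

lemma hC:
  assumes hzw: "\<forall>k::int. z * w * q powi k \<noteq> 1"
  shows "\<forall>e. z/q*(w/q)*q * q powi e \<noteq> 1"
proof
  fix e :: int
  have "z/q*(w/q)*q * q powi e = z*w*q powi (e - 1)"
    using qnz by (simp add: power_int_diff field_simps)
  then show "z/q*(w/q)*q * q powi e \<noteq> 1" using hzw by simp
qed

lemma hZ:
  assumes hz: "\<forall>k::int. z * q powi k \<noteq> 1"
  shows "\<forall>e. z/q*q * q powi e \<noteq> 1"
  using hz qnz by simp

lemma phiy_alg:
  fixes g p p2 pa pc1 p5 pb pc2 al be :: complex
  shows "g*p / (p2 * (al*pa) * (g*pc1) * p5 * (be*pb) * (g*pc2)) = g/(al*g*be*g) * (p/(p2*pa*pc1*p5*pb*pc2))"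
  by (simp add: divide_inverse inverse_mult_distrib ac_simps)

lemma Phiy_shift:
  fixes i j r' s' :: nat
  assumes hz: "\<forall>k::int. z * q powi k \<noteq> 1" and hw: "\<forall>k::int. w * q powi k \<noteq> 1"
    and hzw: "\<forall>k::int. z * w * q powi k \<noteq> 1"
  defines "A \<equiv> z/q * q powi (2*int i - int j)" and "B \<equiv> w/q * q powi (2*int j - int i)"
    and "C \<equiv> z/q*(w/q)*q"
  shows "Phiy (int(i+r')) (int(j+s')) (int i) (int j - int i) (- int j) (z/q) (w/q) q
    = qpoch C q (int(i+j)) / (qpoch (z/q*q) q (2*int i - int j) * qpoch C q (int(i+j)) * qpoch (w/q*q) q (2*int j - int i) * qpoch C q (int(i+j)))
      * (P (A*B*q) q (r'+s') / (P q q r' * P (A*q) q r' * P (A*B*q) q r' * P q q s' * P (B*q) q s' * P (A*B*q) q s'))"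
proof -
  have hC': "\<forall>e. C * q powi e \<noteq> 1" unfolding C_def by (rule hC[OF hzw])
  have ABq: "C * q powi int (i+j) = A*B*q"
  proof -
    have "q powi (2*int i - int j) * q powi (2*int j - int i) = q powi int (i+j)"
      by (simp add: qpi_add add.commute)
    then show ?thesis unfolding A_def B_def C_def by (simp add: ac_simps)
  qed
  have h1: "qpoch C q (int(i+r') + int(j+s')) = qpoch C q (int(i+j)) * P (A*B*q) q (r'+s')"
  proof -
    have e: "int(i+r') + int(j+s') = int(i+j) + int(r'+s')" by simp
    show ?thesis unfolding e using QS[OF hC', where d="int(i+j)" and k="r'+s'"] ABq by simp
  qed
  have h2: "qpoch q q (int(i+r') - int i) = P q q r'" using qpoch_nat[of q r'] by simp
  have h3: "qpoch (z/q*q) q (int(i+r') - (int j - int i)) = qpoch (z/q*q) q (2*int i - int j) * P (A*q) q r'"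
  proof -
    have e: "int(i+r') - (int j - int i) = (2*int i - int j) + int r'" by simp
    have "z/q*q * q powi (2*int i - int j) = A*q" unfolding A_def by simp
    then show ?thesis unfolding e using QS[OF hZ[OF hz], where d="2*int i - int j" and k="r'"] by simp
  qed
  have h4: "qpoch C q (int(i+r') - - int j) = qpoch C q (int(i+j)) * P (A*B*q) q r'"
  proof -
    have e: "int(i+r') - - int j = int(i+j) + int r'" by simp
    show ?thesis unfolding e using QS[OF hC', where d="int(i+j)" and k="r'"] ABq by simp
  qed
  have h5: "qpoch q q (int(j+s') + - int j) = P q q s'" using qpoch_nat[of q s'] by simp
  have h6: "qpoch (w/q*q) q (int(j+s') + (int j - int i)) = qpoch (w/q*q) q (2*int j - int i) * P (B*q) q s'"
  proof -
    have e: "int(j+s') + (int j - int i) = (2*int j - int i) + int s'" by simp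
    have "w/q*q * q powi (2*int j - int i) = B*q" unfolding B_def by simp
    then show ?thesis unfolding e using QS[OF hZ[OF hw], where d="2*int j - int i" and k="s'"] by simp
  qed
  have h7: "qpoch C q (int(j+s') + int i) = qpoch C q (int(i+j)) * P (A*B*q) q s'"
  proof -
    have e: "int(j+s') + int i = int(i+j) + int s'" by simp
    show ?thesis unfolding e using QS[OF hC', where d="int(i+j)" and k="s'"] ABq by simp
  qed
  show ?thesis unfolding Phiy_def C_def[symmetric] h1 h2 h3 h4 h5 h6 h7
    by (rule phiy_alg)
qed

lemma prod_le_sq: "(x::nat)*y \<le> x*x+y*y"
proof (cases "x \<le> y")
  case True then have "x*y \<le> y*y" by (simp add: mult_le_mono1)
  then show ?thesis by linarith
next
  case False then have "x*y \<le> x*x" by (simp add: mult_le_mono2)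
  then show ?thesis by linarith
qed

lemma Kker_shift:
  fixes i j n' m' r' s' :: nat and z w :: complex
  assumes rn: "r' \<le> n'" and sm: "s' \<le> m'"
  defines "A \<equiv> z/q * q powi (2*int i - int j)" and "B \<equiv> w/q * q powi (2*int j - int i)"
  shows "Kker (int(i+n')) (int(j+m')) (int(i+r')) (int(j+s')) (z/q) (w/q) q
    = (z/q)^i * (w/q)^j * q^(i*i+j*j-i*j) * (A^r' * B^s' * q^(r'*r'+s'*s'-r'*s') / (P q q (n'-r') * P q q (m'-s')))"
proof -
  have d1: "qpoch q q (int(i+n') - int(i+r')) = P q q (n'-r')"
  proof -
    have "int(i+n') - int(i+r') = int (n'-r')" using rn by simp
    then show ?thesis by (simp only: qpoch_nat)
  qed
  have d2: "qpoch q q (int(j+m') - int(j+s')) = P q q (m'-s')"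
  proof -
    have "int(j+m') - int(j+s') = int (m'-s')" using sm by simp
    then show ?thesis by (simp only: qpoch_nat)
  qed
  have p1: "(z/q) powi int(i+r') = (z/q)^i * (z/q)^r'" unfolding power_int_of_nat by (rule power_add)
  have p2: "(w/q) powi int(j+s') = (w/q)^j * (w/q)^s'" unfolding power_int_of_nat by (rule power_add)
  have ex: "int(i+r')^2 - int(i+r')*int(j+s') + int(j+s')^2
     = int(i*i+j*j-i*j) + (2*int i - int j)*int r' + (2*int j - int i)*int s' + int(r'*r'+s'*s'-r'*s')"
    using prod_le_sq[of i j] prod_le_sq[of r' s'] by (simp add: of_nat_diff power2_eq_square algebra_simps)
  have qe: "q powi (int(i+r')^2 - int(i+r')*int(j+s') + int(j+s')^2)
     = q^(i*i+j*j-i*j) * (q powi (2*int i - int j))^r' * (q powi (2*int j - int i))^s' * q^(r'*r'+s'*s'-r'*s')"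
    unfolding ex qpi_add[symmetric] power_int_mult power_int_of_nat ..
  show ?thesis unfolding Kker_def d1 d2 p1 p2 qe A_def B_def power_mult_distrib
    by (simp add: ac_simps)
qed

lemma sum_int_range: "(\<Sum>r=0..int n. f r) = (\<Sum>r\<le>n. f (int r))"
proof -
  have "{0..int n} = int ` {..n}"
  proof
    show "int ` {..n} \<subseteq> {0..int n}" by auto
    show "{0..int n} \<subseteq> int ` {..n}"
    proof
      fix x assume "x \<in> {0..int n}"
      then show "x \<in> int ` {..n}" by (intro image_eqI[of _ _ "nat x"]) auto
    qed
  qed
  then show ?thesis by (simp add: sum.reindex)
qed

lemma sum_shift_van:
  fixes f :: "nat \<Rightarrow> complex"
  assumes "k \<le> n" and "\<And>r. r < k \<Longrightarrow> f r = 0"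
  shows "(\<Sum>r\<le>n. f r) = (\<Sum>j\<le>n-k. f (k+j))"
proof -
  have "(\<Sum>r\<le>n. f r) = (\<Sum>r\<le>n. if k \<le> r then f r else 0)"
    by (rule sum.cong) (use assms(2) in auto)
  then show ?thesis using sum_ge_shift[OF assms(1)] by simp
qed

lemma Phiy_zero_r: "r < int i \<Longrightarrow> Phiy r s (int i) y2 y3 a b q = 0"
  unfolding Phiy_def using qpoch_qq_neg[of "r - int i"] by simp

lemma Phiy_zero_s: "s < int j \<Longrightarrow> Phiy r s y1 y2 (- int j) a b q = 0"
  unfolding Phiy_def using qpoch_qq_neg[of "s + - int j"] by simp

lemma G:
  fixes i j n m :: nat and z w :: complex
  assumes hz: "\<forall>k::int. z * q powi k \<noteq> 1" and hw: "\<forall>k::int. w * q powi k \<noteq> 1"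
    and hzw: "\<forall>k::int. z * w * q powi k \<noteq> 1" and z0: "z \<noteq> 0" and w0: "w \<noteq> 0"
  shows "(\<Sum>r=0..int n. \<Sum>s=0..int m. Kker (int n) (int m) r s (z/q) (w/q) q * Phiy r s (int i) (int j - int i) (- int j) (z/q) (w/q) q)
     = (z/q)^i * (w/q)^j * q^(i*i+j*j-i*j) * Phiy (int n) (int m) (int i) (int j - int i) (- int j) (z/q) (w/q) q"
proof -
  define F where "F r s = Kker (int n) (int m) r s (z/q) (w/q) q * Phiy r s (int i) (int j - int i) (- int j) (z/q) (w/q) q" for r s
  have L: "(\<Sum>r=0..int n. \<Sum>s=0..int m. F r s) = (\<Sum>r\<le>n. \<Sum>s\<le>m. F (int r) (int s))"
    by (simp add: sum_int_range)
  show ?thesis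
  proof (cases "i \<le> n \<and> j \<le> m")
    case True
    then obtain n' m' where n: "n = i + n'" and m: "m = j + m'" using le_Suc_ex by blast
    define A where "A = z/q * q powi (2*int i - int j)"
    define B where "B = w/q * q powi (2*int j - int i)"
    define C where "C = z/q*(w/q)*q"
    define \<kappa> where "\<kappa> = qpoch C q (int(i+j)) / (qpoch (z/q*q) q (2*int i - int j) * qpoch C q (int(i+j)) * qpoch (w/q*q) q (2*int j - int i) * qpoch C q (int(i+j)))"
    define c0 where "c0 = (z/q)^i * (w/q)^j * q^(i*i+j*j-i*j)"
    define core_t where "core_t r s = A^r * B^s * q^(r*r+s*s-r*s) / (P q q (n'-r) * P q q (m'-s)) *
            (P (A*B*q) q (r+s) / (P q q r * P (A*q) q r * P (A*B*q) q r * P q q s * P (B*q) q s * P (A*B*q) q s))" for r s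
    have PS: "Phiy (int(i+r')) (int(j+s')) (int i) (int j - int i) (- int j) (z/q) (w/q) q
       = \<kappa> * (P (A*B*q) q (r'+s') / (P q q r' * P (A*q) q r' * P (A*B*q) q r' * P q q s' * P (B*q) q s' * P (A*B*q) q s'))" for r' s'
      unfolding \<kappa>_def A_def B_def C_def by (rule Phiy_shift[OF hz hw hzw])
    have "(\<Sum>r\<le>n. \<Sum>s\<le>m. F (int r) (int s)) = (\<Sum>r'\<le>n'. \<Sum>s\<le>m. F (int (i+r')) (int s))"
      using sum_shift_van[of i n "\<lambda>r. \<Sum>s\<le>m. F (int r) (int s)"] True n
      by (simp add: F_def Phiy_zero_r)
    also have "\<dots> = (\<Sum>r'\<le>n'. \<Sum>s'\<le>m'. F (int (i+r')) (int (j+s')))"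
      by (rule sum.cong[OF refl]) (use sum_shift_van[of j m] True m in \<open>simp add: F_def Phiy_zero_s\<close>)
    also have "\<dots> = (\<Sum>r'\<le>n'. \<Sum>s'\<le>m'. (c0 * \<kappa>) * core_t r' s')"
    proof (rule sum.cong[OF refl], rule sum.cong[OF refl])
      fix r' s' assume "r' \<in> {..n'}" "s' \<in> {..m'}"
      then have rs: "r' \<le> n'" "s' \<le> m'" by auto
      show "F (int (i+r')) (int (j+s')) = (c0 * \<kappa>) * core_t r' s'"
        unfolding F_def n m Kker_shift[OF rs, of i j z w] PS c0_def core_t_def A_def B_def
        by (simp add: ac_simps)
    qed
    also have "\<dots> = (c0 * \<kappa>) * (\<Sum>r'\<le>n'. \<Sum>s'\<le>m'. core_t r' s')"
      by (simp add: sum_distrib_left)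
    also have "(\<Sum>r'\<le>n'. \<Sum>s'\<le>m'. core_t r' s') = P (A*B*q) q (n'+m') / (P q q n' * P (A*q) q n' * P (A*B*q) q n' * P q q m' * P (B*q) q m' * P (A*B*q) q m')"
      unfolding core_t_def
    proof (rule core)
      have qd: "q powi d * q ^ t = q powi (d + int t)" for d t
        using qpi_add[of d "int t"] by simp
      show "\<forall>t. A*q*q^t \<noteq> 1"
      proof
        fix t
        have "A*q*q^t = z * q powi (2*int i - int j + int t)"
          unfolding A_def qd[symmetric] using qnz by (simp add: ac_simps)
        then show "A*q*q^t \<noteq> 1" using hz by simp
      qed
      show "\<forall>t. B*q*q^t \<noteq> 1"
      proof
        fix t
        have "B*q*q^t = w * q powi (2*int j - int i + int t)"
          unfolding B_def qd[symmetric] using qnz by (simp add: ac_simps)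
        then show "B*q*q^t \<noteq> 1" using hw by simp
      qed
      show "\<forall>t. A*B*q*q^t \<noteq> 1"
      proof
        fix t
        have e1: "q powi (2*int i - int j) * q powi (2*int j - int i) * q ^ t = q powi (int (i+j) + int t)"
          by (simp add: qpi_add qd add.commute add.left_commute)
        have "A*B*q*q^t = C * q powi (int (i+j) + int t)"
          unfolding A_def B_def C_def e1[symmetric] by (simp add: ac_simps)
        then show "A*B*q*q^t \<noteq> 1" using hC[OF hzw] unfolding C_def by simp
      qed
      show "A \<noteq> 0" using z0 qnz by (simp add: A_def)
      show "B \<noteq> 0" using w0 qnz by (simp add: B_def)
    qed
    also have "(c0 * \<kappa>) * (P (A*B*q) q (n'+m') / (P q q n' * P (A*q) q n' * P (A*B*q) q n' * P q q m' * P (B*q) q m' * P (A*B*q) q m'))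
       = c0 * Phiy (int n) (int m) (int i) (int j - int i) (- int j) (z/q) (w/q) q"
      unfolding n m PS by simp
    finally have X: "(\<Sum>r\<le>n. \<Sum>s\<le>m. F (int r) (int s)) = c0 * Phiy (int n) (int m) (int i) (int j - int i) (- int j) (z/q) (w/q) q" .
    show ?thesis using X L unfolding c0_def F_def by simp
  next
    case False
    have R: "Phiy (int n) (int m) (int i) (int j - int i) (- int j) (z/q) (w/q) q = 0"
      using False Phiy_zero_r[of "int n" i] Phiy_zero_s[of "int m" j] by auto
    have "(\<Sum>r\<le>n. \<Sum>s\<le>m. F (int r) (int s)) = 0"
      using False by (intro sum.neutral ballI) (auto simp: F_def Phiy_zero_r Phiy_zero_s)
    then show ?thesis using L unfolding F_def R by simp
  qed
qed

lemma per_sigma: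
  fixes n m :: nat and z w :: complex
  assumes hz: "\<forall>k::int. z * q powi k \<noteq> 1" and hw: "\<forall>k::int. w * q powi k \<noteq> 1"
    and hzw: "\<forall>k::int. z * w * q powi k \<noteq> 1" and z0: "z \<noteq> 0" and w0: "w \<noteq> 0"
    and \<sigma>: "\<sigma> permutes {1,2,3::nat}"
  shows "(\<Sum>r=0..int n. \<Sum>s=0..int m. Kker (int n) (int m) r s (z/q) (w/q) q *
            Phiy r s (int (\<sigma> 1) - 1) (int (\<sigma> 2) - 2) (int (\<sigma> 3) - 3) (z/q) (w/q) q)
     = z^(\<sigma> 1 - 1) * w^(3 - \<sigma> 3) * Phiy (int n) (int m) (int (\<sigma> 1) - 1) (int (\<sigma> 2) - 2) (int (\<sigma> 3) - 3) (z/q) (w/q) q"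
proof -
  have m1: "\<sigma> 1 \<in> {1,2,3}" and m2: "\<sigma> 2 \<in> {1,2,3}" and m3: "\<sigma> 3 \<in> {1,2,3}"
    using permutes_in_image[OF \<sigma>] by auto
  have inj: "inj \<sigma>" using permutes_inj[OF \<sigma>] .
  have d12: "\<sigma> 1 \<noteq> \<sigma> 2" and d13: "\<sigma> 1 \<noteq> \<sigma> 3" and d23: "\<sigma> 2 \<noteq> \<sigma> 3"
    using inj by (auto dest: injD)
  define i where "i = \<sigma> 1 - 1"
  define j where "j = 3 - \<sigma> 3"
  have e1: "int (\<sigma> 1) - 1 = int i" using m1 by (auto simp: i_def)
  have e3: "int (\<sigma> 3) - 3 = - int j" using m3 by (auto simp: j_def)
  have e2: "int (\<sigma> 2) - 2 = int j - int i" using m1 m2 m3 d12 d13 d23 by (auto simp: i_def j_def)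
  have ex: "i*i+j*j-i*j = i + j" using m1 m3 d13 by (auto simp: i_def j_def)
  have "(z/q)^i * (w/q)^j * q^(i+j) = z^i * w^j"
    using qnz by (simp add: power_add power_divide field_simps)
  then show ?thesis unfolding e1 e2 e3 G[OF hz hw hzw z0 w0] ex
    by (simp add: i_def j_def)
qed

end

theorem theorem4p9:
  fixes n m :: nat and u v c d z w q :: complex
  assumes "q \<noteq> 0" and "\<forall>k::nat. k \<ge> 1 \<longrightarrow> q ^ k \<noteq> 1"
    and "z \<noteq> 0" and "w \<noteq> 0" and "u \<noteq> 0" and "d \<noteq> 0"
    and "\<forall>k::int. z * q powi k \<noteq> 1"
    and "\<forall>k::int. w * q powi k \<noteq> 1"
    and "\<forall>k::int. z * w * q powi k \<noteq> 1"
  shows "(\<Sum>r=0..int n. \<Sum>s=0..int m.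
            Kker (int n) (int m) r s (z/q) (w/q) q * PhiS r s u v c d z w q)
         = PhiS (int n) (int m) (u*z) (v*w) (c*z) (d*w) z w q"
proof -
  interpret qq q using assms(1,2) by unfold_locales auto
  define S where "S = {\<sigma>. \<sigma> permutes {1,2,3::nat}}"
  have fS: "finite S" unfolding S_def by (rule finite_permutations) simp
  define co where "co \<sigma> = of_int (sign \<sigma>) * (u*z) ^ (\<sigma> 1 - 1)
        * (if \<sigma> 3 = 1 then v / d else 1)
        * (if \<sigma> 1 = 3 then c / u else 1)
        * (d*w) ^ (3 - \<sigma> 3)" for \<sigma> :: "nat \<Rightarrow> nat"
  define Ph where "Ph \<sigma> r s = Phiy r s (int (\<sigma> 1) - 1) (int (\<sigma> 2) - 2) (int (\<sigma> 3) - 3) (z/q) (w/q) q" for \<sigma> :: "nat \<Rightarrow> nat" and r s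
  have PS: "PhiS r s u v c d z w q = (\<Sum>\<sigma>\<in>S. co \<sigma> * Ph \<sigma> r s)" for r s
    unfolding PhiS_def S_def co_def Ph_def ..
  have PS2: "PhiS (int n) (int m) (u*z) (v*w) (c*z) (d*w) z w q = (\<Sum>\<sigma>\<in>S. co \<sigma> * (z^(\<sigma> 1 - 1) * w^(3 - \<sigma> 3) * Ph \<sigma> (int n) (int m)))"
    unfolding PhiS_def S_def
  proof (rule sum.cong[OF refl])
    fix \<sigma> :: "nat \<Rightarrow> nat"
    have a: "v*w/(d*w) = v/d" using assms(4) by simp
    have b: "c*z/(u*z) = c/u" using assms(3) by simp
    show "of_int (sign \<sigma>) * (u*z*z) ^ (\<sigma> 1 - 1) * (if \<sigma> 3 = 1 then v*w / (d*w) else 1)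
        * (if \<sigma> 1 = 3 then c*z / (u*z) else 1) * (d*w*w) ^ (3 - \<sigma> 3)
        * Phiy (int n) (int m) (int (\<sigma> 1) - 1) (int (\<sigma> 2) - 2) (int (\<sigma> 3) - 3) (z/q) (w/q) q
        = co \<sigma> * (z^(\<sigma> 1 - 1) * w^(3 - \<sigma> 3) * Ph \<sigma> (int n) (int m))"
      unfolding a b co_def Ph_def by (simp add: power_mult_distrib ac_simps)
  qed
  have "(\<Sum>r=0..int n. \<Sum>s=0..int m. Kker (int n) (int m) r s (z/q) (w/q) q * PhiS r s u v c d z w q)
      = (\<Sum>r=0..int n. \<Sum>s=0..int m. \<Sum>\<sigma>\<in>S. co \<sigma> * (Kker (int n) (int m) r s (z/q) (w/q) q * Ph \<sigma> r s))"
    unfolding PS by (simp only: sum_distrib_left mult.left_commute)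
  also have "\<dots> = (\<Sum>r=0..int n. \<Sum>\<sigma>\<in>S. \<Sum>s=0..int m. co \<sigma> * (Kker (int n) (int m) r s (z/q) (w/q) q * Ph \<sigma> r s))"
    by (rule sum.cong[OF refl], rule sum.swap)
  also have "\<dots> = (\<Sum>\<sigma>\<in>S. \<Sum>r=0..int n. \<Sum>s=0..int m. co \<sigma> * (Kker (int n) (int m) r s (z/q) (w/q) q * Ph \<sigma> r s))"
    by (rule sum.swap)
  also have "\<dots> = (\<Sum>\<sigma>\<in>S. co \<sigma> * (\<Sum>r=0..int n. \<Sum>s=0..int m. Kker (int n) (int m) r s (z/q) (w/q) q * Ph \<sigma> r s))"
    by (simp only: sum_distrib_left)
  also have "\<dots> = (\<Sum>\<sigma>\<in>S. co \<sigma> * (z^(\<sigma> 1 - 1) * w^(3 - \<sigma> 3) * Ph \<sigma> (int n) (int m)))"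
  proof (rule sum.cong[OF refl])
    fix \<sigma> assume "\<sigma> \<in> S"
    then have \<sigma>: "\<sigma> permutes {1,2,3}" by (simp add: S_def)
    show "co \<sigma> * (\<Sum>r=0..int n. \<Sum>s=0..int m. Kker (int n) (int m) r s (z/q) (w/q) q * Ph \<sigma> r s) = co \<sigma> * (z^(\<sigma> 1 - 1) * w^(3 - \<sigma> 3) * Ph \<sigma> (int n) (int m))"
      unfolding Ph_def per_sigma[OF assms(7,8,9,3,4) \<sigma>] ..
  qed
  finally show ?thesis unfolding PS2 .
qed

end
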